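(* Let $m\ge 1$ and let $(a_0,\dots,a_{m-1})$ be a finite sequence of non-negative integers with P-G triangle entries $d_k^{(j)}$. Let $B_j=d_{m-j}^{(j-1)}$ for $1\le j\le m$ be the entries of its eastern edge (so $B_1=a_{m-1}$ and $B_m=d_0^{(m-1)}$), and suppose $0\le B_1\le B_2\le\cdots\le B_m$. Then for every integer $Z\ge 0$ there exists an integer $C_1\ge B_1$ such that, in the P-G triangle generated by the extended sequence $(a_0,\dots,a_{m-1},C_1)$, the entries $C_j:=d_{m+1-j}^{(j-1)}$ ($1\le j\le m+1$) of its new eastern edge satisfy $C_j\ge B_j$ for $1\le j\le m$ and $C_{m+1}=Z$.
   Context: For a finite or infinite sequence $\mathfrak u=(a_0,a_1,\dots)$ of non-negative integers, the P-G triangle generated by $\mathfrak u$ consists of the numbers $d_k^{(j)}$ defined by $d_k^{(0)}=a_k$ and $d_k^{(j+1)}=|d_{k+1}^{(j)}-d_k^{(j)}|$ for $j,k\ge 0$ (for a finite sequence $(a_0,\dots,a_{N-1})$ these are defined for $0\le k\le N-1-j$). *)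

theory Defs
  imports Main
begin

text \<open>Entries are meaningful for k + j \<le> N - 1 (they only involve a_k,...,a_{k+j}).\<close>

fun pg :: "nat list \<Rightarrow> nat \<Rightarrow> nat \<Rightarrow> nat" where
  "pg xs 0 k = xs ! k"
| "pg xs (Suc j) k = nat \<bar>int (pg xs j (Suc k)) - int (pg xs j k)\<bar>"

end

theory Submission
  imports Defs
begin

lemma pg_append: "k + j < length xs \<Longrightarrow> pg (xs @ ys) j k = pg xs j k"
proof (induction j arbitrary: k)
  case 0 then show ?case by (simp add: nth_append)
next
  case (Suc j) then show ?case by simp
qed

theorem proposition3p3:
  fixes xs :: "nat list" and Z :: nat
  assumes "length xs = m" and "m \<ge> 1"
    and "\<And>j. 1 \<le> j \<Longrightarrow> j < m \<Longrightarrow> pg xs (j - 1) (m - j) \<le> pg xs j (m - (j + 1))"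
  shows "\<exists>C1::nat. C1 \<ge> pg xs 0 (m - 1) \<and>
           (\<forall>j. 1 \<le> j \<and> j \<le> m \<longrightarrow> pg (xs @ [C1]) (j - 1) (m + 1 - j) \<ge> pg xs (j - 1) (m - j)) \<and>
           pg (xs @ [C1]) m 0 = Z"
proof -
  define B where "B i = pg xs (i - 1) (m - i)" for i
  define C1 where "C1 = Z + (\<Sum>i\<in>{1..m}. B i)"
  define ys where "ys = xs @ [C1]"
  have P: "pg ys t (m - t) = Z + (\<Sum>i\<in>{t+1..m}. B i)" if "t \<le> m" for t
    using that
  proof (induction t)
    case 0 then show ?case using assms(1) by (simp add: ys_def C1_def nth_append)
  next
    case (Suc t)
    have e1: "pg ys t (m - Suc t) = B (Suc t)"
      unfolding ys_def B_def using Suc.prems assms(1) by (simp add: pg_append)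
    have e2: "{t+1..m} = insert (Suc t) {Suc t+1..m}" using Suc.prems by auto
    have e3: "(\<Sum>i\<in>{t+1..m}. B i) = B (Suc t) + (\<Sum>i\<in>{Suc t+1..m}. B i)"
      unfolding e2 by simp
    have e4: "Suc (m - Suc t) = m - t" using Suc.prems by simp
    have "pg ys (Suc t) (m - Suc t) = nat \<bar>int (pg ys t (m - t)) - int (B (Suc t))\<bar>"
      by (simp add: e4 e1)
    also have "\<dots> = Z + (\<Sum>i\<in>{Suc t+1..m}. B i)"
    proof -
      have "pg ys t (m - t) = B (Suc t) + (Z + (\<Sum>i\<in>{Suc t+1..m}. B i))"
        using Suc.IH Suc.prems e3 by simp
      moreover have "\<And>a b::nat. nat \<bar>int (a + b) - int a\<bar> = b" by simp
      ultimately show ?thesis by metis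
    qed
    finally show ?case .
  qed
  show ?thesis
  proof (intro exI conjI allI impI)
    show "pg xs 0 (m - 1) \<le> C1"
    proof -
      have "B 1 \<le> (\<Sum>i\<in>{1..m}. B i)" using assms(2)
        by (intro member_le_sum) auto
      then show ?thesis unfolding C1_def B_def by simp
    qed
    show "pg (xs @ [C1]) m 0 = Z" using P[of m] by (simp add: ys_def)
    fix j assume j: "1 \<le> j \<and> j \<le> m"
    have "pg ys (j - 1) (m - (j - 1)) = Z + (\<Sum>i\<in>{j - 1 + 1..m}. B i)"
      using P[of "j - 1"] j by (metis diff_le_self le_trans)
    moreover have "m - (j - 1) = m + 1 - j" "j - 1 + 1 = j" using j by auto
    moreover have "B j \<le> (\<Sum>i\<in>{j..m}. B i)" using j by (intro member_le_sum) auto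
    ultimately show "pg xs (j - 1) (m - j) \<le> pg (xs @ [C1]) (j - 1) (m + 1 - j)"
      unfolding ys_def B_def by simp
  qed
qed

end
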